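(* Assume each $f_i$ is differentiable and $L$-smooth. Then for every $x\in\mathrm{St}(d,r)^\epsilon$, $\|\nabla\mathcal{L}(x)\|_F\le C\|\Lambda(x)\|_F$, where $C=\frac{3L'}{\lambda(1-\epsilon)}+2$.
   Context: Notation: $\mathrm{sym}(A)=\frac12(A+A^\top)$, $\mathrm{skew}(A)=\frac12(A-A^\top)$; $\langle A,B\rangle=\mathrm{Tr}(AB^\top)$; $\|\cdot\|_F$ Frobenius norm. $\mathrm{St}(d,r)=\{x\in\mathbb{R}^{d\times r}:x^\top x=I_r\}$; for $\epsilon\in(0,3/4)$, $\mathrm{St}(d,r)^\epsilon=\{x:\|x^\top x-I_r\|_F\le\epsilon\}$. Functions: $f_1,\dots,f_n:\mathbb{R}^{d\times r}\to\mathbb{R}$, $L$-smooth meaning $f_i(y)\le f_i(x)+\langle\nabla f_i(x),y-x\rangle+\frac L2\|y-x\|_F^2$; $f=\frac1n\sum_if_i$ is $C^2$. $\mathrm{grad}\, g(x)=\mathrm{skew}(\nabla g(x)x^\top)x$. For $\lambda>0$, $\Lambda(x)=\mathrm{grad} f(x)+\lambda x(x^\top x-I_r)$, $\Lambda_i$ analogously with $f_i$. $\hat L=\max(L,\max_{x\in\mathrm{St}(d,r)^\epsilon}\|\nabla f(x)\|_F)$, $s=\sup_{x\in\mathrm{St}(d,r)^\epsilon}\|\mathrm{sym}(x^\top\nabla f(x))\|_F$, $\gamma\ge\frac{2}{3-4\epsilon}\big(L(1-\epsilon)+3s+\hat L^2\frac{(1+\epsilon)^2}{\lambda(1-\epsilon)}\big)$.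 Merit function $\mathcal{L}(x)=f(x)-\frac12\langle\mathrm{sym}(x^\top\nabla f(x)),x^\top x-I_r\rangle+\frac\gamma4\|x^\top x-I_r\|_F^2$. $L_{\mathcal{L}}$: Lipschitz constant of $\nabla\mathcal{L}$ on $\mathrm{St}(d,r)^\epsilon$; $L_\Lambda$: constant such that $\Lambda$ and all $\Lambda_i$ are $L_\Lambda$-Lipschitz (standing property); $L'=\max\{\hat L,L_{\mathcal{L}},L_\Lambda\}$. *)

theory Defs
  imports "HOL-Analysis.Analysis"
begin

text \<open>Matrices in R^(d x r) are represented as real^'r^'d (rows indexed by 'd).
The Euclidean norm on nested vectors is the Frobenius norm, and the inner
product is the trace inner product Tr(A B^T).\<close>

definition msym :: "real^'n^'n \<Rightarrow> real^'n^'n" where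
  "msym A = (1/2) *\<^sub>R (A + transpose A)"

definition mskew :: "real^'n^'n \<Rightarrow> real^'n^'n" where
  "mskew A = (1/2) *\<^sub>R (A - transpose A)"

definition StiefelEps :: "real \<Rightarrow> (real^'r^'d) set" where
  "StiefelEps eps = {x. norm (transpose x ** x - mat 1) \<le> eps}"

text \<open>Riemannian gradient grad g(x) = skew(\<nabla>g(x) x^T) x, given the Euclidean gradient G = \<nabla>g(x).\<close>
definition rgrad :: "real^'r^'d \<Rightarrow> real^'r^'d \<Rightarrow> real^'r^'d" where
  "rgrad G x = mskew (G ** transpose x) ** x"

text \<open>\<Lambda>(x) = grad g(x) + \<lambda> x (x^T x - I), with G the Euclidean gradient of g at x.\<close>
definition LamMap :: "real \<Rightarrow> real^'r^'d \<Rightarrow> real^'r^'d \<Rightarrow> real^'r^'d" where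
  "LamMap lam G x = rgrad G x + lam *\<^sub>R (x ** (transpose x ** x - mat 1))"

text \<open>Merit function, given the value fx = f(x) and the Euclidean gradient G = \<nabla>f(x).\<close>
definition merit :: "real \<Rightarrow> real \<Rightarrow> real^'r^'d \<Rightarrow> real^'r^'d \<Rightarrow> real" where
  "merit gam fx G x = fx - (1/2) * (msym (transpose x ** G) \<bullet> (transpose x ** x - mat 1))
      + (gam/4) * (norm (transpose x ** x - mat 1))^2"

definition favg :: "nat \<Rightarrow> (nat \<Rightarrow> 'a \<Rightarrow> real) \<Rightarrow> 'a \<Rightarrow> real" where
  "favg n f y = (1 / real n) * (\<Sum>i<n. f i y)"

definition gavg :: "nat \<Rightarrow> (nat \<Rightarrow> 'a \<Rightarrow> 'b::real_vector) \<Rightarrow> 'a \<Rightarrow> 'b" where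
  "gavg n g y = (1 / real n) *\<^sub>R (\<Sum>i<n. g i y)"

end

theory Submission
  imports Defs
begin


lemma inner_mat_sum: "(A::real^'n^'m) \<bullet> B = (\<Sum>i\<in>UNIV. \<Sum>j\<in>UNIV. A$i$j * B$i$j)"
  by (simp add: inner_vec_def)

lemma inner_mm_left: "((A::real^'n^'m) ** (B::real^'p^'n)) \<bullet> C = B \<bullet> (transpose A ** C)"
proof -
  have "((A ** B) \<bullet> C) = (\<Sum>i\<in>UNIV. \<Sum>j\<in>UNIV. \<Sum>k\<in>UNIV. A$i$k * B$k$j * C$i$j)"
    by (simp add: inner_mat_sum matrix_matrix_mult_def sum_distrib_right)
  also have "\<dots> = (\<Sum>i\<in>UNIV. \<Sum>k\<in>UNIV. \<Sum>j\<in>UNIV. A$i$k * B$k$j * C$i$j)"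
    by (rule sum.cong[OF refl], rule sum.swap)
  also have "\<dots> = (\<Sum>k\<in>UNIV. \<Sum>i\<in>UNIV. \<Sum>j\<in>UNIV. A$i$k * B$k$j * C$i$j)"
    by (rule sum.swap)
  also have "\<dots> = (\<Sum>k\<in>UNIV. \<Sum>j\<in>UNIV. \<Sum>i\<in>UNIV. A$i$k * B$k$j * C$i$j)"
    by (rule sum.cong[OF refl], rule sum.swap)
  also have "\<dots> = B \<bullet> (transpose A ** C)"
    by (simp add: inner_mat_sum matrix_matrix_mult_def sum_distrib_left transpose_def mult_ac)
  finally show ?thesis .
qed

lemma inner_transpose: "transpose (A::real^'n^'m) \<bullet> transpose B = A \<bullet> B"
proof -
  have "transpose A \<bullet> transpose B = (\<Sum>i\<in>UNIV. \<Sum>j\<in>UNIV. A$j$i * B$j$i)"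
    by (simp add: inner_mat_sum transpose_def)
  also have "\<dots> = (\<Sum>j\<in>UNIV. \<Sum>i\<in>UNIV. A$j$i * B$j$i)" by (rule sum.swap)
  also have "\<dots> = A \<bullet> B" by (simp add: inner_mat_sum)
  finally show ?thesis .
qed

lemma norm_transpose: "norm (transpose (A::real^'n^'m)) = norm A"
  by (simp add: norm_eq_sqrt_inner inner_transpose)

lemma inner_mm_right: "((A::real^'n^'m) ** (B::real^'p^'n)) \<bullet> C = A \<bullet> (C ** transpose B)"
proof -
  have "(A ** B) \<bullet> C = transpose (A ** B) \<bullet> transpose C" by (simp add: inner_transpose)
  also have "\<dots> = (transpose B ** transpose A) \<bullet> transpose C" by (simp add: matrix_transpose_mul)
  also have "\<dots> = transpose A \<bullet> (transpose (transpose B) ** transpose C)" by (rule inner_mm_left)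
  also have "\<dots> = transpose A \<bullet> transpose (C ** transpose B)" by (simp add: matrix_transpose_mul)
  also have "\<dots> = A \<bullet> (C ** transpose B)" by (simp add: inner_transpose)
  finally show ?thesis .
qed

lemma norm_sq_rows: "(norm (A::real^'n^'m))^2 = (\<Sum>i\<in>UNIV. (norm (A$i))^2)"
  by (simp add: power2_norm_eq_inner inner_vec_def)

lemma norm_sq_vec: "(norm (v::real^'n))^2 = (\<Sum>i\<in>UNIV. (v$i)^2)"
  unfolding power2_norm_eq_inner by (simp add: inner_vec_def power2_eq_square)

lemma mm_entry: "((A::real^'n^'m) ** (B::real^'p^'n))$i$j = (A$i) \<bullet> (column j B)"
  by (simp add: matrix_matrix_mult_def inner_vec_def column_def)

lemma norm_mm: "norm ((A::real^'n^'m) ** (B::real^'p^'n)) \<le> norm A * norm B"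
proof -
  have "(norm (A ** B))^2 = (\<Sum>i\<in>UNIV. \<Sum>j\<in>UNIV. ((A ** B)$i$j)^2)"
    by (simp add: norm_sq_rows norm_sq_vec)
  also have "\<dots> \<le> (\<Sum>i\<in>UNIV. \<Sum>j\<in>UNIV. (norm (A$i))^2 * (norm (column j B))^2)"
  proof (intro sum_mono)
    fix i j
    have "\<bar>(A ** B)$i$j\<bar> \<le> norm (A$i) * norm (column j B)"
      unfolding mm_entry by (rule Cauchy_Schwarz_ineq2)
    then have "\<bar>(A ** B)$i$j\<bar>^2 \<le> (norm (A$i) * norm (column j B))^2"
      by (intro power_mono) auto
    then show "((A ** B)$i$j)^2 \<le> (norm (A$i))^2 * (norm (column j B))^2"
      by (simp add: power_mult_distrib)
  qed
  also have "\<dots> = (\<Sum>i\<in>UNIV. (norm (A$i))^2) * (\<Sum>j\<in>UNIV. (norm (column j B))^2)"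
    by (simp add: sum_product)
  also have "(\<Sum>j\<in>UNIV. (norm (column j B))^2) = (norm (transpose B))^2"
    by (simp add: norm_sq_rows) (metis row_transpose row_def vec_lambda_eta)
  also have "\<dots> = (norm B)^2" by (simp add: norm_transpose)
  finally have "(norm (A ** B))^2 \<le> (norm A * norm B)^2"
    by (simp add: norm_sq_rows power_mult_distrib)
  then show ?thesis
    by (meson mult_nonneg_nonneg norm_ge_zero power2_le_imp_le)
qed



lemma mm_add_right: "(A::real^'n^'m) ** (B + C) = A ** B + A ** C"
  by (rule matrix_add_ldistrib)
lemma mm_add_left: "((A::real^'n^'m) + B) ** (C::real^'p^'n) = A ** C + B ** C"
  by (vector matrix_matrix_mult_def sum.distrib[symmetric] field_simps)
lemma mm_scaleR_left: "(r *\<^sub>R (A::real^'n^'m)) ** (C::real^'p^'n) = r *\<^sub>R (A ** C)"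
  by (simp add: scalar_matrix_assoc)
lemma mm_scaleR_right: "(A::real^'n^'m) ** (r *\<^sub>R (C::real^'p^'n)) = r *\<^sub>R (A ** C)"
  by (simp add: matrix_scalar_ac scalar_matrix_assoc)

lemma bb_mm: "bounded_bilinear ((**) :: real^'n^'m \<Rightarrow> real^'p^'n \<Rightarrow> real^'p^'m)"
proof
  show "\<exists>K. \<forall>a b. norm ((a::real^'n^'m) ** (b::real^'p^'n)) \<le> norm a * norm b * K"
    by (rule exI[of _ 1]) (simp add: norm_mm)
qed (auto simp: mm_add_left mm_add_right mm_scaleR_left mm_scaleR_right)

lemmas mm_diff_left = bounded_bilinear.diff_left[OF bb_mm]
lemmas mm_diff_right = bounded_bilinear.diff_right[OF bb_mm]
lemmas mm_minus_left = bounded_bilinear.minus_left[OF bb_mm]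
lemmas mm_minus_right = bounded_bilinear.minus_right[OF bb_mm]

lemma transpose_add: "transpose ((A::real^'n^'m) + B) = transpose A + transpose B"
  by (simp add: transpose_def vec_eq_iff)
lemma transpose_diff: "transpose ((A::real^'n^'m) - B) = transpose A - transpose B"
  by (simp add: transpose_def vec_eq_iff)
lemma transpose_zero: "transpose (0::real^'n^'m) = 0"
  by (simp add: transpose_def vec_eq_iff)

lemma bl_transpose: "bounded_linear (transpose :: real^'n^'m \<Rightarrow> real^'m^'n)"
  by (rule bounded_linearI') (auto simp: transpose_add transpose_scalar)

lemma skew_sym_inner: "transpose K = - K \<Longrightarrow> transpose S = S \<Longrightarrow> (K::real^'n^'n) \<bullet> S = 0"
  using inner_transpose[of K S] by simp

lemmas msimps = mm_add_left mm_add_right mm_diff_left mm_diff_right mm_scaleR_left mm_scaleR_right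
  matrix_mul_assoc transpose_add transpose_diff transpose_scalar matrix_transpose_mul
  mm_minus_left mm_minus_right

definition Em :: "real^'r^'d \<Rightarrow> real^'r^'r" where
  "Em z = transpose z ** z - mat 1"

lemma Em_sym: "transpose (Em z) = Em z"
  by (simp add: Em_def msimps)

lemma zTz: "transpose z ** z = mat 1 + Em z"
  by (simp add: Em_def)

definition Nstep :: "real^'r^'d \<Rightarrow> real^'r^'d" where
  "Nstep z = z ** (mat 1 - (1/2) *\<^sub>R Em z)"

lemma Nstep_E: "Em (Nstep z) = (-(3/4)) *\<^sub>R (Em z ** Em z) + (1/4) *\<^sub>R (Em z ** Em z ** Em z)"
proof -
  let ?E = "Em z"
  have t: "transpose (mat 1 - (1/2) *\<^sub>R ?E) = mat 1 - (1/2) *\<^sub>R ?E"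
    by (simp add: transpose_diff transpose_scalar Em_sym)
  have "transpose (Nstep z) ** Nstep z = (mat 1 - (1/2) *\<^sub>R ?E) ** (transpose z ** z) ** (mat 1 - (1/2) *\<^sub>R ?E)"
    unfolding Nstep_def matrix_transpose_mul t by (simp add: matrix_mul_assoc)
  also have "\<dots> = (mat 1 - (1/2) *\<^sub>R ?E) ** (mat 1 + ?E) ** (mat 1 - (1/2) *\<^sub>R ?E)"
    by (simp add: zTz)
  also have "\<dots> = mat 1 + ((-(3/4)) *\<^sub>R (?E ** ?E) + (1/4) *\<^sub>R (?E ** ?E ** ?E))"
    by (simp add: msimps scaleR_diff_right scaleR_add_right)
      (simp add: algebra_simps flip: scaleR_add_left)
  finally show ?thesis by (simp add: Em_def)
qed



lemma Em_step_norm: "norm (Em (Nstep z)) \<le> (norm (Em z))^2 * (3 + norm (Em z)) / 4"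
proof -
  let ?E = "Em z" let ?e = "norm (Em z)"
  have a: "norm (?E ** ?E) \<le> ?e^2" using norm_mm[of ?E ?E] by (simp add: power2_eq_square)
  have b: "norm (?E ** ?E ** ?E) \<le> ?e^2 * ?e"
    using norm_mm[of "?E ** ?E" ?E] a by (meson mult_right_mono norm_ge_zero order_trans)
  have "norm (Em (Nstep z)) \<le> norm ((-(3/4)) *\<^sub>R (?E ** ?E)) + norm ((1/4) *\<^sub>R (?E ** ?E ** ?E))"
    unfolding Nstep_E by (rule norm_triangle_ineq)
  also have "\<dots> = (3/4) * norm (?E ** ?E) + (1/4) * norm (?E ** ?E ** ?E)" by simp
  also have "\<dots> \<le> (3/4) * ?e^2 + (1/4) * (?e^2 * ?e)" using a b by linarith
  finally show ?thesis by (simp add: field_simps)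
qed

lemma norm_zM: "(norm (z ** M))^2 \<le> (1 + norm (Em z)) * (norm M)^2"
proof -
  have "(norm (z ** M))^2 = M \<bullet> (transpose z ** (z ** M))"
    by (simp add: power2_norm_eq_inner inner_mm_left)
  also have "\<dots> = M \<bullet> M + M \<bullet> (Em z ** M)"
    by (simp add: matrix_mul_assoc zTz msimps inner_add_right)
  also have "\<dots> \<le> (norm M)^2 + norm M * (norm (Em z) * norm M)"
  proof -
    have "M \<bullet> (Em z ** M) \<le> norm M * norm (Em z ** M)" by (rule Cauchy_Schwarz_ineq2[THEN abs_le_D1])
    also have "\<dots> \<le> norm M * (norm (Em z) * norm M)" by (simp add: mult_left_mono norm_mm)
    finally show ?thesis by (simp add: power2_norm_eq_inner)
  qed
  finally show ?thesis by (simp add: algebra_simps power2_eq_square)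
qed

lemma Nstep_move: "norm (Nstep z - z) = (1/2) * norm (z ** Em z)"
  by (simp add: Nstep_def msimps)

lemma zE_lower: "(norm (Em z))^2 * (1 - norm (Em z)) \<le> (norm (z ** Em z))^2"
proof -
  let ?E = "Em z" let ?e = "norm (Em z)"
  have "(norm (z ** ?E))^2 = ?E \<bullet> (transpose z ** (z ** ?E))"
    by (simp add: power2_norm_eq_inner inner_mm_left)
  also have "\<dots> = ?E \<bullet> ?E + ?E \<bullet> (?E ** ?E)"
    by (simp add: matrix_mul_assoc zTz msimps inner_add_right)
  finally have eq: "(norm (z ** ?E))^2 = ?e^2 + ?E \<bullet> (?E ** ?E)" by (simp add: power2_norm_eq_inner)
  have "- (?E \<bullet> (?E ** ?E)) \<le> ?e * norm (?E ** ?E)" by (rule Cauchy_Schwarz_ineq2[THEN abs_le_D2])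
  also have "\<dots> \<le> ?e * (?e * ?e)" by (simp add: mult_left_mono norm_mm)
  finally show ?thesis using eq by (simp add: algebra_simps power2_eq_square)
qed

lemma mskew_transpose: "transpose (mskew M) = - mskew M"
  by (simp add: mskew_def transpose_diff transpose_scalar algebra_simps)

lemma msym_transpose: "transpose (msym M) = msym M"
  by (simp add: msym_def transpose_add transpose_scalar algebra_simps)

lemma Lam_lower:
  assumes "lam > 0"
  shows "lam * norm (z ** Em z) \<le> norm (LamMap lam G z)"
proof -
  let ?K = "mskew (G ** transpose z)" let ?v = "z ** Em z"
  have "(?K ** z) \<bullet> ?v = ?K \<bullet> (?v ** transpose z)" by (rule inner_mm_right)
  also have "\<dots> = 0"
    by (rule skew_sym_inner[OF mskew_transpose]) (simp add: msimps Em_sym)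
  finally have k0: "(?K ** z) \<bullet> ?v = 0" .
  have e1: "LamMap lam G z \<bullet> ?v = lam * (norm ?v)^2"
    using k0 by (simp add: LamMap_def rgrad_def inner_add_left power2_norm_eq_inner flip: Em_def)
  have "LamMap lam G z \<bullet> ?v \<le> norm (LamMap lam G z) * norm ?v"
    by (rule Cauchy_Schwarz_ineq2[THEN abs_le_D1])
  with e1 have "lam * norm ?v * norm ?v \<le> norm (LamMap lam G z) * norm ?v"
    by (simp add: power2_eq_square mult_ac)
  then show ?thesis
    by (cases "norm ?v = 0") (use assms in auto)
qed



lemma Em_tendsto: "(X \<longlongrightarrow> l) F \<Longrightarrow> ((\<lambda>k. Em (X k)) \<longlongrightarrow> Em l) F"
  unfolding Em_def
  by (intro tendsto_diff tendsto_const bounded_bilinear.tendsto[OF bb_mm]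
      bounded_linear.tendsto[OF bl_transpose])

lemma proj_exists:
  fixes x :: "real^'r^'d"
  defines "e0 \<equiv> norm (Em x)"
  defines "q \<equiv> e0 * (3 + e0) / 4"
  assumes e0: "e0 \<le> 3/4"
  shows "\<exists>y. Em y = 0 \<and> norm (x - y) \<le> norm (x ** Em x) / 2 + (1/2) * sqrt (1 + e0) * e0 * q / (1 - q)"
proof -
  define y where "y k = (Nstep ^^ k) x" for k
  define c where "c = (1/2) * sqrt (1 + e0) * e0"
  define a where "a = norm (x ** Em x)"
  define B where "B = a / 2 + c * q / (1 - q)"
  have e0nn: "0 \<le> e0" unfolding e0_def by simp
  have q0: "0 \<le> q" unfolding q_def using e0nn by simp
  have "e0 * (3 + e0) \<le> 3/4 * (3 + 3/4)" using e0 e0nn by (intro mult_mono) auto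
  then have q1: "q < 1" unfolding q_def by simp
  have c0: "0 \<le> c" unfolding c_def using e0nn by simp
  have y0: "y 0 = x" and ySuc: "\<And>k. y (Suc k) = Nstep (y k)" by (simp_all add: y_def)
  have qk: "q^k * e0 \<le> e0" for k
    using q0 q1 e0nn by (intro mult_left_le_one_le) (auto simp: power_le_one)
  have ek: "norm (Em (y k)) \<le> q^k * e0" for k
  proof (induction k)
    case 0 then show ?case by (simp add: y0 e0_def)
  next
    case (Suc k)
    let ?e = "norm (Em (y k))"
    have "?e \<le> e0" using Suc qk[of k] by linarith
    then have "?e * (3 + ?e) / 4 \<le> q" unfolding q_def using e0nn
      by (intro divide_right_mono mult_mono) auto
    have "norm (Em (y (Suc k))) \<le> ?e * (?e * (3 + ?e) / 4)"
      using Em_step_norm[of "y k"] by (simp add: ySuc power2_eq_square mult_ac)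
    also have "\<dots> \<le> q^k * e0 * q"
      using Suc \<open>?e * (3 + ?e) / 4 \<le> q\<close> q0 e0nn by (intro mult_mono) auto
    finally show ?case by (simp add: mult_ac)
  qed
  have mv: "norm (y (Suc k) - y k) \<le> c * q^k" for k
  proof -
    let ?e = "norm (Em (y k))"
    have "?e \<le> e0" using ek[of k] qk[of k] by linarith
    have "norm (y k ** Em (y k)) = sqrt ((norm (y k ** Em (y k)))^2)" by simp
    also have "\<dots> \<le> sqrt ((1 + ?e) * ?e^2)" using norm_zM[of "y k" "Em (y k)"]
      by (intro real_sqrt_le_mono) simp
    also have "\<dots> = sqrt (1 + ?e) * ?e" by (simp add: real_sqrt_mult)
    also have "\<dots> \<le> sqrt (1 + e0) * (q^k * e0)"
      using \<open>?e \<le> e0\<close> ek[of k] e0nn by (intro mult_mono) auto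
    finally have "norm (y k ** Em (y k)) \<le> sqrt (1 + e0) * (q^k * e0)" .
    then show ?thesis using Nstep_move[of "y k"] by (simp add: ySuc c_def mult_ac)
  qed
  have bnd: "norm (y (Suc n) - x) \<le> a / 2 + c * q * (1 - q^n) / (1 - q)" for n
  proof (induction n)
    case 0 then show ?case using Nstep_move[of x] by (simp add: y0 ySuc a_def)
  next
    case (Suc n)
    have "norm (y (Suc (Suc n)) - x) \<le> norm (y (Suc (Suc n)) - y (Suc n)) + norm (y (Suc n) - x)"
      by (rule norm_diff_triangle_le[where y="y (Suc n)"]) simp_all
    also have "\<dots> \<le> c * q^(Suc n) + (a / 2 + c * q * (1 - q^n) / (1 - q))"
      using mv[of "Suc n"] Suc by linarith
    also have "\<dots> = a / 2 + c * q * (1 - q^Suc n) / (1 - q)"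
      using q1 by (simp add: field_simps)
    finally show ?case .
  qed
  have B0: "0 \<le> B" unfolding B_def a_def using c0 q0 q1 by simp
  have bndB: "norm (y n - x) \<le> B" for n
  proof (cases n)
    case 0 then show ?thesis using B0 by (simp add: y0)
  next
    case (Suc m)
    have "c * q * (1 - q^m) / (1 - q) \<le> c * q / (1 - q)"
      using c0 q0 q1 by (intro divide_right_mono mult_left_le) (auto simp: mult_nonneg_nonneg)
    then show ?thesis using bnd[of m] unfolding B_def \<open>n = Suc m\<close> by linarith
  qed
  have "bounded (range y)"
    unfolding bounded_iff
  proof (intro exI ballI)
    fix z assume "z \<in> range y"
    then obtain n where "z = y n" by auto
    have "norm (y n) \<le> norm (y n - x) + norm x" using norm_triangle_ineq[of "y n - x" x] by simp
    then show "norm z \<le> B + norm x" using bndB[of n] unfolding \<open>z = y n\<close> by linarith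
  qed
  then obtain l r where r: "strict_mono r" and lim: "(y \<circ> r) \<longlonglongrightarrow> l"
    using bounded_imp_convergent_subsequence by blast
  have l1: "(\<lambda>k. Em ((y \<circ> r) k)) \<longlonglongrightarrow> Em l" by (rule Em_tendsto[OF lim])
  have l2: "(\<lambda>k. Em ((y \<circ> r) k)) \<longlonglongrightarrow> 0"
  proof (rule Lim_null_comparison)
    show "\<forall>\<^sub>F k in sequentially. norm (Em ((y \<circ> r) k)) \<le> q^k * e0"
    proof (intro always_eventually allI)
      fix k
      have "q^(r k) \<le> q^k" using seq_suble[OF r, of k] q0 q1 by (simp add: power_decreasing)
      then show "norm (Em ((y \<circ> r) k)) \<le> q^k * e0"
        using ek[of "r k"] e0nn by (simp add: mult_right_mono order_trans)
    qed
    show "(\<lambda>k. q^k * e0) \<longlonglongrightarrow> 0"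
      using q0 q1 by (intro tendsto_mult_left_zero LIMSEQ_power_zero) simp
  qed
  have El: "Em l = 0" using LIMSEQ_unique[OF l1 l2] .
  have "(\<lambda>k. norm (x - (y \<circ> r) k)) \<longlonglongrightarrow> norm (x - l)"
    by (intro tendsto_intros lim)
  then have "norm (x - l) \<le> B"
    by (rule LIMSEQ_le_const2) (auto simp: norm_minus_commute[of x] bndB)
  then show ?thesis using El unfolding B_def a_def c_def by (auto simp: mult_ac)
qed



lemma bl_msym: "bounded_linear (msym :: real^'n^'n \<Rightarrow> real^'n^'n)"
  by (rule bounded_linearI') (auto simp: msym_def transpose_add transpose_scalar algebra_simps)

lemma merit_grad_St:
  fixes G :: "real^'r^'d \<Rightarrow> real^'r^'d" and Fv :: "real^'r^'d \<Rightarrow> real"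
  assumes dG: "(G has_derivative G') (at y)"
    and dF: "(Fv has_derivative (\<lambda>h. G y \<bullet> h)) (at y)"
    and dM: "((\<lambda>z. merit gam (Fv z) (G z) z) has_derivative (\<lambda>h. g \<bullet> h)) (at y)"
    and Ey: "Em y = 0"
  shows "g = G y - y ** msym (transpose y ** G y)"
proof -
  let ?T = "\<lambda>z. msym (transpose z ** G z)"
  let ?Q = "\<lambda>z. transpose z ** z - mat 1 :: real^'r^'r"
  have dtr: "(transpose has_derivative transpose) (at y)"
    by (rule bounded_linear_imp_has_derivative[OF bl_transpose])
  have dT: "(?T has_derivative (\<lambda>h. msym (transpose y ** G' h + transpose h ** G y))) (at y)"
    by (intro bounded_linear.has_derivative[OF bl_msym] bounded_bilinear.FDERIV[OF bb_mm] dtr dG)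
  have "(?Q has_derivative (\<lambda>h. (transpose y ** h + transpose h ** y) - 0)) (at y)"
    by (intro has_derivative_diff has_derivative_const bounded_bilinear.FDERIV[OF bb_mm] dtr has_derivative_ident)
  then have dQ: "(?Q has_derivative (\<lambda>h. transpose y ** h + transpose h ** y)) (at y)" by simp
  have Qy: "?Q y = 0" using Ey by (simp add: Em_def)
  have fe: "(\<lambda>z. merit gam (Fv z) (G z) z) = (\<lambda>z. Fv z - (1/2) * (?T z \<bullet> ?Q z) + (gam/4) * (?Q z \<bullet> ?Q z))"
    by (simp add: merit_def power2_norm_eq_inner)
  have "((\<lambda>z. merit gam (Fv z) (G z) z) has_derivative
      (\<lambda>h. G y \<bullet> h - (1/2) * (?T y \<bullet> (transpose y ** h + transpose h ** y)
            + msym (transpose y ** G' h + transpose h ** G y) \<bullet> ?Q y)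
          + (gam/4) * (?Q y \<bullet> (transpose y ** h + transpose h ** y) + (transpose y ** h + transpose h ** y) \<bullet> ?Q y))) (at y)"
    unfolding fe
    by (intro has_derivative_add has_derivative_diff has_derivative_mult_right has_derivative_inner dF dT dQ)
  then have d2: "((\<lambda>z. merit gam (Fv z) (G z) z) has_derivative
      (\<lambda>h. G y \<bullet> h - (1/2) * (?T y \<bullet> (transpose y ** h + transpose h ** y)))) (at y)"
    unfolding Qy by simp
  have eqh: "G y \<bullet> h - (1/2) * (?T y \<bullet> (transpose y ** h + transpose h ** y))
     = (G y - y ** ?T y) \<bullet> h" for h
  proof -
    have "?T y \<bullet> (transpose h ** y) = transpose (?T y) \<bullet> transpose (transpose h ** y)"
      by (simp add: inner_transpose)
    also have "\<dots> = ?T y \<bullet> (transpose y ** h)"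
      by (simp add: msym_transpose matrix_transpose_mul)
    finally have a: "?T y \<bullet> (transpose h ** y) = ?T y \<bullet> (transpose y ** h)" .
    have b: "(y ** ?T y) \<bullet> h = ?T y \<bullet> (transpose y ** h)" by (rule inner_mm_left)
    show ?thesis using a b by (simp add: inner_add_right inner_diff_left)
  qed
  have "(\<lambda>h. g \<bullet> h) = (\<lambda>h. (G y - y ** ?T y) \<bullet> h)"
    using has_derivative_unique[OF dM d2] eqh by simp
  then have "\<And>h. (g - (G y - y ** ?T y)) \<bullet> h = 0"
    by (metis inner_diff_left right_minus_eq)
  then have "(g - (G y - y ** ?T y)) \<bullet> (g - (G y - y ** ?T y)) = 0" by blast
  then show ?thesis by simp
qed



lemma grad_le_2Lam:
  fixes y g :: "real^'r^'d"
  assumes yy: "transpose y ** y = mat 1"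
  shows "norm (g - y ** msym (transpose y ** g)) \<le> 2 * norm (LamMap lam g y)"
proof -
  have yy2: "A ** transpose y ** y = A" for A :: "real^'r^'k"
    by (metis matrix_mul_assoc yy matrix_mul_rid)
  define u where "u = g - y ** (transpose y ** g)"
  define K where "K = transpose y ** g - transpose g ** y"
  have h1: "LamMap lam g y = (1/2) *\<^sub>R (u + y ** K)"
    by (simp add: LamMap_def rgrad_def mskew_def u_def K_def yy yy2 msimps algebra_simps)
  have h2: "g - y ** msym (transpose y ** g) = u + (1/2) *\<^sub>R (y ** K)"
    by (simp add: msym_def u_def K_def yy yy2 msimps algebra_simps)
  have tu: "transpose y ** u = 0" by (simp add: u_def msimps yy)
  have h3: "u \<bullet> (y ** K) = 0"
    using inner_mm_left[of y K u] tu by (simp add: inner_commute)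
  have "(norm (u + (1/2) *\<^sub>R (y ** K)))^2 = (norm u)^2 + (1/4) * (norm (y ** K))^2"
    using h3 by (simp add: power2_norm_eq_inner inner_add_left inner_add_right inner_commute)
  also have "\<dots> \<le> (norm (u + y ** K))^2"
    using h3 by (simp add: power2_norm_eq_inner inner_add_left inner_add_right inner_commute)
  also have "\<dots> = (2 * norm (LamMap lam g y))^2"
    by (simp add: h1 power_mult_distrib)
  finally show ?thesis unfolding h2
    by (rule power2_le_imp_le) simp
qed

lemma near_St:
  fixes x :: "real^'r^'d"
  assumes ex: "norm (Em x) \<le> eps" and eps: "eps < 3/4"
  shows "\<exists>y. Em y = 0 \<and> norm (x - y) \<le> norm (x ** Em x) / (1 - eps)"
proof -
  define e where "e = norm (Em x)"
  define a where "a = norm (x ** Em x)"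
  define y1 where "y1 = Nstep x"
  define e1 where "e1 = norm (Em y1)"
  define p where "p = e^2 * (3 + e) / 4"
  define q1 where "q1 = e1 * (3 + e1) / 4"
  have e0: "0 \<le> e" "e \<le> eps" using ex by (auto simp: e_def)
  have e1p: "e1 \<le> p" unfolding e1_def p_def e_def y1_def by (rule Em_step_norm)
  have e10: "0 \<le> e1" by (simp add: e1_def)
  have "e^2 \<le> (3/4)^2" using e0 eps by (intro power_mono) auto
  then have "p \<le> (3/4)^2 * (3 + 3/4) / 4" unfolding p_def using e0 eps
    by (intro divide_right_mono mult_mono) auto
  then have p1: "p \<le> 135/256" by (simp add: power2_eq_square)
  then have e1b: "e1 \<le> 135/256" using e1p by linarith
  obtain y where Ey: "Em y = 0" and dy: "norm (y1 - y) \<le> norm (y1 ** Em y1) / 2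
      + (1/2) * sqrt (1 + e1) * e1 * q1 / (1 - q1)"
    using proj_exists[of y1] e1b unfolding e1_def q1_def by auto
  have "e1 * (3 + e1) \<le> 135/256 * (3 + 135/256)" using e1b e10 by (intro mult_mono) auto
  then have q1b: "q1 \<le> 47/100" unfolding q1_def by simp
  have q10: "0 \<le> q1" unfolding q1_def using e10 by simp
  have T: "sqrt (1 + e1) \<le> 5/4" using e1b by (intro real_le_lsqrt) (auto simp: power2_eq_square)
  have "norm (y1 ** Em y1) = sqrt ((norm (y1 ** Em y1))^2)" by simp
  also have "\<dots> \<le> sqrt ((1 + e1) * e1^2)" using norm_zM[of y1 "Em y1"]
    by (intro real_sqrt_le_mono) (simp add: e1_def)
  also have "\<dots> = sqrt (1 + e1) * e1" using e10 by (simp add: real_sqrt_mult)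
  finally have b1: "norm (y1 ** Em y1) \<le> sqrt (1 + e1) * e1" .
  have "norm (y1 - y) \<le> (1/2) * sqrt (1 + e1) * e1 * (1 + q1 / (1 - q1))"
  proof -
    define S where "S = sqrt (1 + e1) * e1"
    define R where "R = q1 / (1 - q1)"
    have i1: "(1/2) * sqrt (1 + e1) * e1 * q1 / (1 - q1) = (1/2) * S * R"
      unfolding S_def R_def using q1b by (simp add: field_simps)
    have i2: "(1/2) * sqrt (1 + e1) * e1 * (1 + q1 / (1 - q1)) = S / 2 + (1/2) * S * R"
      unfolding S_def R_def using q1b by (simp add: field_simps)
    have "norm (y1 - y) \<le> norm (y1 ** Em y1) / 2 + (1/2) * S * R" using dy by (simp only: i1)
    also have "\<dots> \<le> S / 2 + (1/2) * S * R" using b1 unfolding S_def by simp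
    finally show ?thesis unfolding i2 .
  qed
  also have "\<dots> = (1/2) * sqrt (1 + e1) * e1 / (1 - q1)"
    using q1b by (simp add: field_simps)
  also have "\<dots> \<le> (1/2) * (5/4) * e1 / (53/100)"
  proof (rule frac_le)
    show "0 \<le> 1 / 2 * (5 / 4) * e1" using e10 by simp
    show "1 / 2 * sqrt (1 + e1) * e1 \<le> 1 / 2 * (5 / 4) * e1" using T e10 by (intro mult_mono) auto
  qed (use q1b in auto)
  finally have d1: "norm (y1 - y) \<le> (5/8) * p / (53/100)" using e1p by simp
  have d0: "norm (x - y1) = a / 2"
    using Nstep_move[of x] by (simp add: y1_def a_def norm_minus_commute)
  have dxy: "norm (x - y) \<le> a / 2 + (5/8) * p / (53/100)"
    using norm_diff_triangle_le[of x y1 "a/2" y "(5/8) * p / (53/100)"] d0 d1 by simp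
  have "(e * (1 - e))^2 = (e^2 * (1 - e)) * (1 - e)" by (simp add: power2_eq_square mult_ac)
  also have "\<dots> \<le> e^2 * (1 - e)"
    using e0 eps by (intro mult_right_le_one_le) auto
  also have "\<dots> \<le> a^2" using zE_lower[of x] by (simp add: a_def e_def)
  finally have ae: "e * (1 - e) \<le> a" by (rule power2_le_imp_le) (simp add: a_def)
  have "e^2 * (3 + e) \<le> e^2 * (3 + 3/4)" using e0 eps by (intro mult_left_mono) auto
  then have pp: "p \<le> e^2 * (15/16)" unfolding p_def by (simp add: mult_ac)
  have ee: "e * e \<le> 3/4 * e" using e0 eps by (intro mult_right_mono) auto
  have "(5/8) * p / (53/100) \<le> (5/8) * (e^2 * (15/16)) / (53/100)"
    using pp by (intro divide_right_mono mult_left_mono) auto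
  also have "\<dots> \<le> e * (1 + e) / 2"
  proof -
    have A: "(5/8) * (e^2 * (15/16)) / (53/100) = (1875/1696) * (e*e)" by (simp add: power2_eq_square)
    have B: "e * (1 + e) / 2 = e/2 + (e*e)/2" by (simp add: algebra_simps)
    show ?thesis unfolding A B using ee e0 by linarith
  qed
  also have "\<dots> \<le> a / (1 - e) * (1 + e) / 2"
  proof -
    have "e \<le> a / (1 - e)" using ae e0 eps by (simp add: pos_le_divide_eq)
    then show ?thesis using e0 by (intro divide_right_mono mult_right_mono) auto
  qed
  also have "\<dots> = a / (1 - e) - a / 2" using e0 eps by (simp add: field_simps)
  also have "\<dots> \<le> a / (1 - eps) - a / 2"
  proof -
    have "a / (1 - e) \<le> a / (1 - eps)"
      by (rule frac_le) (use e0 eps in \<open>auto simp: a_def\<close>)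
    then show ?thesis by simp
  qed
  finally have fin: "(5/8) * p / (53/100) \<le> a / (1 - eps) - a / 2" .
  have "norm (x - y) \<le> a / (1 - eps)" using fin dxy by linarith
  then show ?thesis using Ey unfolding a_def by blast
qed



theorem lemma15:
  fixes f :: "nat \<Rightarrow> real^'r^'d \<Rightarrow> real"
    and gf :: "nat \<Rightarrow> real^'r^'d \<Rightarrow> real^'r^'d"
    and n :: nat and L eps lam gam L_Lc L_Lam :: real
    and H :: "real^'r^'d \<Rightarrow> ((real^'r^'d) \<Rightarrow>\<^sub>L (real^'r^'d))"
    and gLc :: "real^'r^'d \<Rightarrow> real^'r^'d"
    and x :: "real^'r^'d"
  defines "Lhat \<equiv> max L (Sup ((\<lambda>y. norm (gavg n gf y)) ` StiefelEps eps))"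
    and "s \<equiv> Sup ((\<lambda>y. norm (msym (transpose y ** gavg n gf y))) ` StiefelEps eps)"
  assumes n_pos: "n > 0"
    and eps: "0 < eps" "eps < 3/4"
    and lam: "lam > 0"
    and grad_fi: "\<And>i y. i < n \<Longrightarrow> (f i has_derivative (\<lambda>h. gf i y \<bullet> h)) (at y)"
    and smooth_fi: "\<And>i y z. i < n \<Longrightarrow>
        f i z \<le> f i y + gf i y \<bullet> (z - y) + (L/2) * (norm (z - y))^2"
    and F_C2: "\<And>y. (gavg n gf has_derivative blinfun_apply (H y)) (at y)"
    and H_cont: "continuous_on UNIV H"
    and gam: "gam \<ge> 2 / (3 - 4*eps) * (L * (1 - eps) + 3 * s
              + Lhat^2 * (1 + eps)^2 / (lam * (1 - eps)))"
    and grad_merit: "\<And>y. ((\<lambda>z. merit gam (favg n f z) (gavg n gf z) z) has_derivative (\<lambda>h. gLc y \<bullet> h)) (at y)"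
    and Lip_merit: "\<And>y z. y \<in> StiefelEps eps \<Longrightarrow> z \<in> StiefelEps eps \<Longrightarrow>
        norm (gLc y - gLc z) \<le> L_Lc * norm (y - z)"
    and Lip_Lam: "\<And>y z. y \<in> StiefelEps eps \<Longrightarrow> z \<in> StiefelEps eps \<Longrightarrow>
        norm (LamMap lam (gavg n gf y) y - LamMap lam (gavg n gf z) z) \<le> L_Lam * norm (y - z)"
    and Lip_Lam_i: "\<And>i y z. i < n \<Longrightarrow> y \<in> StiefelEps eps \<Longrightarrow> z \<in> StiefelEps eps \<Longrightarrow>
        norm (LamMap lam (gf i y) y - LamMap lam (gf i z) z) \<le> L_Lam * norm (y - z)"
    and x_in: "x \<in> StiefelEps eps"
  shows "norm (gLc x) \<le> (3 * max Lhat (max L_Lc L_Lam) / (lam * (1 - eps)) + 2)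
                         * norm (LamMap lam (gavg n gf x) x)"
proof -
  let ?G = "gavg n gf"
  let ?Lp = "max Lhat (max L_Lc L_Lam)"
  let ?Lx = "norm (LamMap lam (?G x) x)"
  have xe: "norm (Em x) \<le> eps" using x_in by (simp add: StiefelEps_def Em_def)
  obtain y where Ey: "Em y = 0" and dxy: "norm (x - y) \<le> norm (x ** Em x) / (1 - eps)"
    using near_St[OF xe eps(2)] by blast
  have yS: "y \<in> StiefelEps eps" using Ey eps by (simp add: StiefelEps_def Em_def)
  have yy: "transpose y ** y = mat 1" using Ey by (simp add: Em_def)
  have dF: "(favg n f has_derivative (\<lambda>h. ?G y \<bullet> h)) (at y)"
  proof -
    have "((\<lambda>z. (1 / real n) * (\<Sum>i<n. f i z)) has_derivative (\<lambda>h. (1 / real n) * (\<Sum>i<n. gf i y \<bullet> h))) (at y)"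
      by (intro has_derivative_mult_right has_derivative_sum grad_fi) simp
    moreover have "(\<lambda>z. (1 / real n) * (\<Sum>i<n. f i z)) = favg n f"
      by (simp add: favg_def fun_eq_iff)
    moreover have "(\<lambda>h. (1 / real n) * (\<Sum>i<n. gf i y \<bullet> h)) = (\<lambda>h. ?G y \<bullet> h)"
      by (simp add: gavg_def fun_eq_iff inner_sum_left)
    ultimately show ?thesis by simp
  qed
  have gy: "gLc y = ?G y - y ** msym (transpose y ** ?G y)"
    by (rule merit_grad_St[OF F_C2 dF grad_merit Ey])
  have n1: "norm (gLc y) \<le> 2 * norm (LamMap lam (?G y) y)"
    unfolding gy by (rule grad_le_2Lam[OF yy])
  have n2: "norm (LamMap lam (?G y) y) \<le> ?Lx + L_Lam * norm (x - y)"
  proof -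
    have "norm (LamMap lam (?G y) y - LamMap lam (?G x) x) \<le> L_Lam * norm (y - x)"
      by (rule Lip_Lam[OF yS x_in])
    then show ?thesis using norm_triangle_ineq2[of "LamMap lam (?G y) y" "LamMap lam (?G x) x"]
      by (simp add: norm_minus_commute)
  qed
  have n3: "norm (gLc x) \<le> norm (gLc y) + L_Lc * norm (x - y)"
  proof -
    have "norm (gLc x - gLc y) \<le> L_Lc * norm (x - y)" by (rule Lip_merit[OF x_in yS])
    then show ?thesis using norm_triangle_ineq2[of "gLc x" "gLc y"] by simp
  qed
  have lowL: "lam * norm (x ** Em x) \<le> ?Lx" by (rule Lam_lower[OF lam])
  have e1: "1 - eps > 0" using eps by simp
  have d: "norm (x - y) \<le> ?Lx / (lam * (1 - eps))"
  proof -
    have "norm (x ** Em x) \<le> ?Lx / lam" using lowL lam by (simp add: pos_le_divide_eq mult.commute)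
    then have "norm (x ** Em x) / (1 - eps) \<le> ?Lx / lam / (1 - eps)"
      using e1 by (intro divide_right_mono) auto
    then show ?thesis using dxy by (simp add: divide_divide_eq_left)
  qed
  have LLc: "0 \<le> L_Lc"
  proof -
    have x0: "x \<noteq> 0"
    proof
      assume "x = 0"
      then have "norm (mat 1 :: real^'r^'r) \<le> eps" using xe by (simp add: Em_def)
      moreover have "1 \<le> norm (mat 1 :: real^'r^'r)"
      proof -
        fix i :: 'r
        have "\<bar>(mat 1 :: real^'r^'r) $ i $ i\<bar> \<le> norm ((mat 1 :: real^'r^'r) $ i)" by (rule component_le_norm_cart)
        also have "\<dots> \<le> norm (mat 1 :: real^'r^'r)" by (rule Finite_Cartesian_Product.norm_nth_le)
        finally show ?thesis by (simp add: mat_def)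
      qed
      ultimately show False using eps by simp
    qed
    have tm: "transpose (- x) = - transpose x" by (simp add: transpose_def vec_eq_iff)
    have mxS: "- x \<in> StiefelEps eps" using x_in by (simp add: StiefelEps_def tm mm_minus_left mm_minus_right)
    have "norm (gLc x - gLc (- x)) \<le> L_Lc * norm (x - - x)" by (rule Lip_merit[OF x_in mxS])
    moreover have "x - - x = 2 *\<^sub>R x" by (simp add: scaleR_2)
    ultimately have "norm (gLc x - gLc (- x)) \<le> L_Lc * (2 * norm x)" by simp
    then have "0 \<le> L_Lc * (2 * norm x)" using norm_ge_zero order_trans by blast
    then show ?thesis using x0 by (simp add: zero_le_mult_iff)
  qed
  have Lp0: "0 \<le> ?Lp" using LLc by simp
  have dn: "0 \<le> norm (x - y)" by simp
  have "norm (gLc x) \<le> 2 * ?Lx + (2 * L_Lam + L_Lc) * norm (x - y)"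
  proof -
    have "(2 * L_Lam + L_Lc) * norm (x - y) = 2 * (L_Lam * norm (x - y)) + L_Lc * norm (x - y)"
      by (simp add: distrib_right)
    then show ?thesis using n1 n2 n3 by linarith
  qed
  also have "\<dots> \<le> 2 * ?Lx + (3 * ?Lp) * norm (x - y)"
    using dn by (intro add_left_mono mult_right_mono) auto
  also have "\<dots> \<le> 2 * ?Lx + (3 * ?Lp) * (?Lx / (lam * (1 - eps)))"
    using d Lp0 by (intro add_left_mono mult_left_mono) auto
  also have "\<dots> = (3 * ?Lp / (lam * (1 - eps)) + 2) * ?Lx"
    using lam e1 by (simp add: field_simps)
  finally show ?thesis .
qed

end
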